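(* Let $a,b,u,v$ be integers with $b>a\ge2$ and $u,v\ge2$, and set $X:=ab-a-b$. Suppose that (1) $a$, $b$ and $uv-1$ are pairwise coprime; (2) $\frac{1}{a}+\frac{1}{b}+\frac{v}{uv-1}>1$; (3) $vab-1=(uv-1)X$. Then $u\in\{2,3,6\}$; moreover, if $u=6$ then $(a,b)=(2,3)$, i.e. the triple $(a,b,uv-1)$ equals $(2,3,6v-1)$. *)

theory Defs
  imports Complex_Main
begin

end

theory Submission
  imports Defs
begin

theorem lemma3p4:
  fixes a b u v :: int
  assumes "2 \<le> a" and "a < b" and "2 \<le> u" and "2 \<le> v"
    and "coprime a b" and "coprime a (u * v - 1)" and "coprime b (u * v - 1)"
    and "1 / real_of_int a + 1 / real_of_int b + real_of_int v / real_of_int (u * v - 1) > 1"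
    and "v * a * b - 1 = (u * v - 1) * (a * b - a - b)"
  shows "u \<in> {2, 3, 6} \<and> (u = 6 \<longrightarrow> (a, b) = (2, 3))"
proof -
  define X where "X = a * b - a - b"
  have eq: "X * ((u - 1) * v - 1) = v * (a + b) - 1"
    using assms(9) unfolding X_def by (simp add: algebra_simps)
  have Xpos: "X \<ge> 1"
  proof -
    have "(a - 1) * (b - 1) \<ge> 1 * 2" using assms(1,2) by (intro mult_mono) auto
    thus ?thesis unfolding X_def by (simp add: algebra_simps)
  qed
  have main: "u \<le> 3 \<or> (a = 2 \<and> b = 3)"
  proof (rule ccontr)
    assume H: "\<not> (u \<le> 3 \<or> (a = 2 \<and> b = 3))"
    hence u4: "u \<ge> 4" and nab: "\<not> (a = 2 \<and> b = 3)" by auto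
    have "(u - 1) * v \<ge> 3 * v" using u4 assms(4) by (intro mult_right_mono) auto
    hence "X * ((u - 1) * v - 1) \<ge> X * (3 * v - 1)" using Xpos
      by (intro mult_left_mono) auto
    hence ineq: "v * (a + b) - 1 \<ge> X * (3 * v - 1)" using eq by simp
    show False
    proof (cases "a \<ge> 3")
      case True
      have b4: "b \<ge> 4" using True assms(2) by simp
      have "(a - 3) * (b - 4) \<ge> 0" using True b4 by simp
      hence "2 * X \<ge> a + b" unfolding X_def using True b4 by (simp add: algebra_simps)
      have "X * (3 * v - 1) \<ge> X * (2 * v)" using Xpos assms(4) by (intro mult_left_mono) auto
      moreover have "X * (2 * v) \<ge> (a + b) * v" using \<open>2 * X \<ge> a + b\<close> assms(4)
        by (metis mult.assoc mult.commute mult_right_mono order_le_less_trans less_le_not_le linorder_le_less_linear not_le zero_le_numeral order.trans le_less dual_order.trans mult_nonneg_nonneg)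
      ultimately show False using ineq by (simp add: algebra_simps)
    next
      case False
      hence a2: "a = 2" using assms(1) by simp
      have "b \<noteq> 4" using assms(5) a2 by auto
      hence b5: "b \<ge> 5" using nab a2 assms(2) by auto
      have X2: "X = b - 2" unfolding X_def using a2 by simp
      have "(b - 5) * (2 * v - 1) \<ge> 0" using b5 assms(4) by simp
      thus False using ineq X2 a2 assms(4) by (simp add: algebra_simps)
    qed
  qed
  show ?thesis
  proof (cases "a = 2 \<and> b = 3")
    case True
    hence "X = 1" unfolding X_def by simp
    hence "u = 6" using eq True assms(4) by (simp add: algebra_simps)
    thus ?thesis using True by simp
  next
    case False
    hence "u \<le> 3" using main by blast
    thus ?thesis using assms(3) by auto
  qed
qed

end
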